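(* Let $N,K,d,T$ be positive integers, $W>0$ and $L_0>0$. For each round $t\in[T]$ and item $i\in[N]$ let $\mathbf{x}_{ti}\in\mathbb{R}^d$ be a feature vector with $\|\mathbf{x}_{ti}\|_2\le 1$, and let $\boldsymbol\vartheta^\star=(\boldsymbol\psi^\star,\boldsymbol\phi^\star)\in\mathbb{R}^{2d}$ satisfy $\|\boldsymbol\vartheta^\star\|_2\le W$ and $\langle\boldsymbol\phi^\star,\mathbf{x}_{ti}\rangle\ge L_0$ for all $t\in[T]$, $i\in[N]$. For each $t$ let $(S_t^\star,\mathbf{p}_t^\star)\in\operatorname{argmax}_{S\in\mathcal{S}_K,\ \mathbf{p}\in\mathbb{R}_+^N} R_t(S,\mathbf{p})$. Then for all $t\in[T]$ and all $i\in S_t^\star$, $$0\le p^\star_{ti}\le P:=\frac{3+W+\log K}{L_0}.$$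
   Context: $\mathcal{S}_K=\{S\subseteq[N]:|S|\le K\}$. For a price $p$, the attraction of item $i$ at round $t$ is $v_{ti}(p)=\exp(\langle\boldsymbol\psi^\star,\mathbf{x}_{ti}\rangle-\langle\boldsymbol\phi^\star,\mathbf{x}_{ti}\rangle p)$, and the expected revenue of offering assortment $S$ at price vector $\mathbf{p}\in\mathbb{R}_+^N$ is the multinomial-logit revenue $R_t(S,\mathbf{p})=\dfrac{\sum_{i\in S}p_i v_{ti}(p_i)}{1+\sum_{j\in S}v_{tj}(p_j)}$. *)

theory Defs
  imports "HOL-Analysis.Analysis"
begin

definition attraction :: "'d::euclidean_space \<Rightarrow> 'd \<Rightarrow> 'd \<Rightarrow> real \<Rightarrow> real" where
  "attraction psi phi xv p = exp (psi \<bullet> xv - (phi \<bullet> xv) * p)"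

definition revenue :: "(nat \<Rightarrow> nat \<Rightarrow> 'd::euclidean_space) \<Rightarrow> 'd \<Rightarrow> 'd \<Rightarrow> nat
    \<Rightarrow> nat set \<Rightarrow> (nat \<Rightarrow> real) \<Rightarrow> real" where
  "revenue x psi phi t S p =
     (\<Sum>i\<in>S. p i * attraction psi phi (x t i) (p i)) /
     (1 + (\<Sum>j\<in>S. attraction psi phi (x t j) (p j)))"

definition assortments :: "nat \<Rightarrow> nat \<Rightarrow> nat set set" where
  "assortments N K = {S. S \<subseteq> {1..N} \<and> card S \<le> K}"

text \<open>Price vectors in R_+^N (values outside [N] are irrelevant and unconstrained).\<close>
definition price_vectors :: "nat \<Rightarrow> (nat \<Rightarrow> real) set" where
  "price_vectors N = {p. \<forall>i\<in>{1..N}. 0 \<le> p i}"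

end

theory Submission
  imports Defs
begin

lemma uexp_le: "(u::real) * exp (- u) \<le> exp (-1)"
proof -
  have "u \<le> exp (u - 1)" using exp_ge_add_one_self[of "u - 1"] by simp
  hence "u * exp (-u) \<le> exp (u - 1) * exp (-u)" by (simp add: mult_right_mono)
  also have "\<dots> = exp (-1)" by (simp add: exp_add[symmetric])
  finally show ?thesis .
qed

lemma uexp_less: "(u::real) \<noteq> 1 \<Longrightarrow> u * exp (- u) < exp (-1)"
proof -
  assume "u \<noteq> 1"
  hence "u < exp (u - 1)" using exp_minus_greater[of "1 - u"] by simp
  hence "u * exp (-u) < exp (u - 1) * exp (-u)" by (simp add: mult_strict_right_mono)
  also have "\<dots> = exp (-1)" by (simp add: exp_add[symmetric])
  finally show ?thesis .
qed

lemma term_le: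
  fixes a b q R :: real assumes b: "b > 0"
  shows "(q - R) * exp (a - b * q) \<le> (1 / b) * exp (a - 1 - b * R)"
proof -
  define u where "u = b * (q - R)"
  have e: "exp (a - b * q) = exp (a - b * R) * exp (- u)"
    unfolding u_def by (simp add: exp_add[symmetric] algebra_simps)
  have "(q - R) * exp (a - b * q) = (1/b) * exp (a - b * R) * (u * exp (-u))"
    using b unfolding e u_def by (simp add: field_simps)
  also have "\<dots> \<le> (1/b) * exp (a - b * R) * exp (-1)"
    using b uexp_le[of u] by (intro mult_left_mono) auto
  also have "\<dots> = (1 / b) * exp (a - 1 - b * R)"
    by (simp add: exp_add[symmetric] algebra_simps)
  finally show ?thesis .
qed

lemma term_less:
  fixes a b q R :: real assumes b: "b > 0" and q: "q \<noteq> R + 1 / b"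
  shows "(q - R) * exp (a - b * q) < (1 / b) * exp (a - 1 - b * R)"
proof -
  define u where "u = b * (q - R)"
  have u1: "u \<noteq> 1" using b q unfolding u_def by (auto simp: field_simps)
  have e: "exp (a - b * q) = exp (a - b * R) * exp (- u)"
    unfolding u_def by (simp add: exp_add[symmetric] algebra_simps)
  have "(q - R) * exp (a - b * q) = (1/b) * exp (a - b * R) * (u * exp (-u))"
    using b unfolding e u_def by (simp add: field_simps)
  also have "\<dots> < (1/b) * exp (a - b * R) * exp (-1)"
    using b uexp_less[OF u1] by (intro mult_strict_left_mono) auto
  also have "\<dots> = (1 / b) * exp (a - 1 - b * R)"
    by (simp add: exp_add[symmetric] algebra_simps)
  finally show ?thesis .
qed

lemma term_opt:
  fixes a b R :: real assumes b: "b > 0"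
  shows "(R + 1 / b - R) * exp (a - b * (R + 1 / b)) = (1 / b) * exp (a - 1 - b * R)"
  using b by (simp add: algebra_simps)

lemma R_bound:
  fixes S :: "nat set" and a b p :: "nat \<Rightarrow> real" and L0 W R :: real and K :: nat
  assumes fin: "finite S" and cS: "card S \<le> K" and K: "K > 0" and L0: "L0 > 0" and W: "W > 0"
    and bj: "\<And>j. j \<in> S \<Longrightarrow> b j \<ge> L0" and aj: "\<And>j. j \<in> S \<Longrightarrow> a j \<le> W"
    and pj: "\<And>j. j \<in> S \<Longrightarrow> p j \<ge> 0"
    and R: "R = (\<Sum>j\<in>S. p j * exp (a j - b j * p j)) / (1 + (\<Sum>j\<in>S. exp (a j - b j * p j)))"
  shows "R \<ge> 0" "L0 * R \<le> 2 + W + ln (real K)"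
proof -
  define v where "v j = exp (a j - b j * p j)" for j
  have D: "1 + (\<Sum>j\<in>S. v j) > 0" by (smt (verit) sum_nonneg exp_gt_zero v_def)
  have R': "R = (\<Sum>j\<in>S. p j * v j) / (1 + (\<Sum>j\<in>S. v j))" using R v_def by simp
  show R0: "R \<ge> 0" unfolding R' using D pj by (intro divide_nonneg_pos sum_nonneg) (auto simp: v_def)
  have "R * (1 + (\<Sum>j\<in>S. v j)) = (\<Sum>j\<in>S. p j * v j)" using D R' by simp
  hence "R = (\<Sum>j\<in>S. (p j - R) * v j)"
    by (simp add: algebra_simps sum_subtractf sum_distrib_left)
  also have "\<dots> \<le> (\<Sum>j\<in>S. (1 / L0) * exp (W - 1 - L0 * R))"
  proof (rule sum_mono)
    fix j assume j: "j \<in> S"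
    have bp: "b j > 0" using bj[OF j] L0 by linarith
    have "(p j - R) * v j \<le> (1 / b j) * exp (a j - 1 - b j * R)"
      unfolding v_def by (rule term_le[OF bp])
    also have "\<dots> \<le> (1 / L0) * exp (W - 1 - L0 * R)"
    proof (rule mult_mono)
      show "1 / b j \<le> 1 / L0" using bj[OF j] L0 by (simp add: frac_le)
      have "b j * R \<ge> L0 * R" using bj[OF j] R0 by (simp add: mult_right_mono)
      then show "exp (a j - 1 - b j * R) \<le> exp (W - 1 - L0 * R)" using aj[OF j] by simp
    qed (use L0 in auto)
    finally show "(p j - R) * v j \<le> (1 / L0) * exp (W - 1 - L0 * R)" .
  qed
  also have "\<dots> = card S * ((1 / L0) * exp (W - 1 - L0 * R))" by simp
  also have "\<dots> \<le> K * ((1 / L0) * exp (W - 1 - L0 * R))"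
    using cS L0 by (intro mult_right_mono) auto
  finally have Rle: "R \<le> K * ((1 / L0) * exp (W - 1 - L0 * R))" .
  show "L0 * R \<le> 2 + W + ln (real K)"
  proof (rule ccontr)
    assume neg: "\<not> L0 * R \<le> 2 + W + ln (real K)"
    hence h: "W - 1 - L0 * R < -3 - ln (real K)" by simp
    have "exp (W - 1 - L0 * R) < exp (-3 - ln (real K))" using h by simp
    also have "\<dots> = exp (-3) / K" using K by (simp add: exp_diff)
    finally have "K * exp (W - 1 - L0 * R) < exp (-3)" using K by (simp add: field_simps)
    hence "L0 * R < exp (-3)" using Rle L0 by (simp add: field_simps)
    also have "exp (-3::real) < 1" by simp
    finally have "L0 * R < 1" .
    moreover have "ln (real K) \<ge> 0" using K by simp
    ultimately show False using neg W by linarith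
  qed
qed

lemma improve:
  fixes S :: "nat set" and a b p :: "nat \<Rightarrow> real" and R q :: real and i :: nat
  assumes fin: "finite S" and i: "i \<in> S" and bi: "b i > 0"
    and R: "R = (\<Sum>j\<in>S. p j * exp (a j - b j * p j)) / (1 + (\<Sum>j\<in>S. exp (a j - b j * p j)))"
    and D: "1 + (\<Sum>j\<in>S. exp (a j - b j * p j)) > 0"
    and D': "1 + (\<Sum>j\<in>S. exp (a j - b j * (p(i:=q)) j)) > 0"
    and gt: "(q - R) * exp (a i - b i * q) > (p i - R) * exp (a i - b i * p i)"
  shows "R < (\<Sum>j\<in>S. (p(i:=q)) j * exp (a j - b j * (p(i:=q)) j)) /
              (1 + (\<Sum>j\<in>S. exp (a j - b j * (p(i:=q)) j)))"
proof -
  define v where "v j = exp (a j - b j * p j)" for j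
  define A where "A = (\<Sum>j\<in>S-{i}. p j * v j)"
  define B where "B = (\<Sum>j\<in>S-{i}. v j)"
  define w where "w = exp (a i - b i * q)"
  have s1: "(\<Sum>j\<in>S. p j * v j) = p i * v i + A" unfolding A_def using sum.remove[OF fin i] by blast
  have s2: "(\<Sum>j\<in>S. v j) = v i + B" unfolding B_def using sum.remove[OF fin i] by blast
  define F where "F j = (p(i:=q)) j * exp (a j - b j * (p(i:=q)) j)" for j
  define G where "G j = exp (a j - b j * (p(i:=q)) j)" for j
  have s3: "(\<Sum>j\<in>S. F j) = q * w + A"
  proof -
    have "(\<Sum>j\<in>S. F j) = F i + (\<Sum>j\<in>S-{i}. F j)" by (rule sum.remove[OF fin i])
    moreover have "(\<Sum>j\<in>S-{i}. F j) = A" unfolding A_def by (rule sum.cong) (auto simp: F_def v_def)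
    moreover have "F i = q * w" by (simp add: F_def w_def)
    ultimately show ?thesis by simp
  qed
  have s4: "(\<Sum>j\<in>S. G j) = w + B"
  proof -
    have "(\<Sum>j\<in>S. G j) = G i + (\<Sum>j\<in>S-{i}. G j)" by (rule sum.remove[OF fin i])
    moreover have "(\<Sum>j\<in>S-{i}. G j) = B" unfolding B_def by (rule sum.cong) (auto simp: G_def v_def)
    moreover have "G i = w" by (simp add: G_def w_def)
    ultimately show ?thesis by simp
  qed
  have Rv: "R = (\<Sum>j\<in>S. p j * v j) / (1 + (\<Sum>j\<in>S. v j))" unfolding v_def by (rule R)
  have D0: "1 + (\<Sum>j\<in>S. v j) > 0" unfolding v_def by (rule D)
  have D1: "1 + v i + B > 0" using D0 s2 by simp
  have D2: "1 + w + B > 0" using D' s4 unfolding G_def by simp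
  have "R * (1 + (\<Sum>j\<in>S. v j)) = (\<Sum>j\<in>S. p j * v j)" using Rv D0 by simp
  hence RR: "R * (1 + v i + B) = p i * v i + A" using s1 s2 by (simp add: add.assoc)
  have g: "(q - R) * w > (p i - R) * v i" using gt unfolding w_def v_def by simp
  have "R * (1 + w + B) < q * w + A" using RR g by (simp add: algebra_simps)
  hence "R < (q * w + A) / (1 + w + B)" using D2 by (simp add: pos_less_divide_eq)
  hence "R < (\<Sum>j\<in>S. F j) / (1 + (\<Sum>j\<in>S. G j))" using s3 s4 by (simp add: add.assoc)
  thus ?thesis unfolding F_def G_def .
qed

theorem lemma2p1:
  fixes N K T :: nat and W L0 :: real
    and x :: "nat \<Rightarrow> nat \<Rightarrow> real ^ 'd"
    and psi phi :: "real ^ 'd"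
    and Sst :: "nat \<Rightarrow> nat set" and pst :: "nat \<Rightarrow> nat \<Rightarrow> real"
  assumes "N > 0" and "K > 0" and "T > 0" and "W > 0" and "L0 > 0"
    and "\<And>t i. t \<in> {1..T} \<Longrightarrow> i \<in> {1..N} \<Longrightarrow> norm (x t i) \<le> 1"
    and "norm (psi, phi) \<le> W"
    and "\<And>t i. t \<in> {1..T} \<Longrightarrow> i \<in> {1..N} \<Longrightarrow> phi \<bullet> x t i \<ge> L0"
    and "\<And>t. t \<in> {1..T} \<Longrightarrow> Sst t \<in> assortments N K \<and> pst t \<in> price_vectors N \<and>
           (\<forall>S\<in>assortments N K. \<forall>p\<in>price_vectors N.
              revenue x psi phi t S p \<le> revenue x psi phi t (Sst t) (pst t))"
  shows "\<forall>t\<in>{1..T}. \<forall>i\<in>Sst t. 0 \<le> pst t i \<and> pst t i \<le> (3 + W + ln (real K)) / L0"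
proof (intro ballI)
  fix t i assume t: "t \<in> {1..T}" and i: "i \<in> Sst t"
  define S where "S = Sst t"
  define p where "p = pst t"
  define a where "a j = psi \<bullet> x t j" for j
  define b where "b j = phi \<bullet> x t j" for j
  have opt: "S \<in> assortments N K" "p \<in> price_vectors N"
    "\<And>S' p'. S' \<in> assortments N K \<Longrightarrow> p' \<in> price_vectors N \<Longrightarrow>
        revenue x psi phi t S' p' \<le> revenue x psi phi t S p"
    using assms(9)[OF t] unfolding S_def p_def by auto
  have SN: "S \<subseteq> {1..N}" and cS: "card S \<le> K" using opt(1) by (auto simp: assortments_def)
  have fin: "finite S" using SN finite_subset by blast
  have iS: "i \<in> S" using i S_def by simp
  have pnn: "\<And>j. j \<in> S \<Longrightarrow> p j \<ge> 0" using opt(2) SN by (auto simp: price_vectors_def)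
  have bj: "\<And>j. j \<in> S \<Longrightarrow> b j \<ge> L0" using assms(8)[OF t] SN b_def by auto
  have aj: "\<And>j. j \<in> S \<Longrightarrow> a j \<le> W"
  proof -
    fix j assume j: "j \<in> S"
    have "a j \<le> norm psi * norm (x t j)" unfolding a_def by (rule norm_cauchy_schwarz)
    also have "\<dots> \<le> norm psi * 1" using assms(6)[OF t] j SN by (intro mult_left_mono) auto
    also have "\<dots> \<le> W" using norm_fst_le[of psi phi] assms(7) by simp
    finally show "a j \<le> W" .
  qed
  have att: "\<And>j r. attraction psi phi (x t j) r = exp (a j - b j * r)"
    by (simp add: attraction_def a_def b_def)
  define R where "R = revenue x psi phi t S p"
  have Rdef: "R = (\<Sum>j\<in>S. p j * exp (a j - b j * p j)) / (1 + (\<Sum>j\<in>S. exp (a j - b j * p j)))"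
    unfolding R_def revenue_def att by simp
  note RB = R_bound[OF fin cS assms(2) assms(5) assms(4) bj aj pnn Rdef]
  have bi: "b i > 0" using bj[OF iS] assms(5) by linarith
  have pi_le: "p i \<le> R + 1 / b i"
  proof (rule ccontr)
    assume "\<not> ?thesis"
    hence ne: "p i \<noteq> R + 1 / b i" by simp
    define q where "q = R + 1 / b i"
    have q0: "q \<ge> 0" using RB(1) bi q_def by simp
    have pv: "p(i:=q) \<in> price_vectors N" using opt(2) q0 by (auto simp: price_vectors_def)
    have gt: "(q - R) * exp (a i - b i * q) > (p i - R) * exp (a i - b i * p i)"
    proof -
      have e: "a i - b i * q = a i - 1 - b i * R" using bi unfolding q_def by (simp add: field_simps)
      have qR: "q - R = 1 / b i" by (simp add: q_def)
      have "(q - R) * exp (a i - b i * q) = (1 / b i) * exp (a i - 1 - b i * R)" by (simp only: e qR)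
      thus ?thesis using term_less[OF bi ne, of "a i"] by linarith
    qed
    have D: "1 + (\<Sum>j\<in>S. exp (a j - b j * p j)) > 0" by (smt (verit) sum_nonneg exp_gt_zero)
    have D': "1 + (\<Sum>j\<in>S. exp (a j - b j * (p(i:=q)) j)) > 0" by (smt (verit) sum_nonneg exp_gt_zero)
    have "R < revenue x psi phi t S (p(i:=q))"
      using improve[OF fin iS bi Rdef D D' gt] unfolding revenue_def att by simp
    moreover have "revenue x psi phi t S (p(i:=q)) \<le> R" using opt(3)[OF opt(1) pv] R_def by simp
    ultimately show False by simp
  qed
  have "1 / b i \<le> 1 / L0" using bj[OF iS] assms(5) by (simp add: frac_le)
  moreover have "R \<le> (2 + W + ln (real K)) / L0" using RB(2) assms(5) by (simp add: field_simps)
  ultimately have "p i \<le> (2 + W + ln (real K)) / L0 + 1 / L0" using pi_le by linarith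
  hence "p i \<le> (3 + W + ln (real K)) / L0" by (simp add: add_divide_distrib[symmetric] add_ac)
  thus "0 \<le> pst t i \<and> pst t i \<le> (3 + W + ln (real K)) / L0" using pnn[OF iS] p_def by simp
qed

end
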